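(* Let $d\ge2$ and $c\in\mathbb{C}_p$ (no further conditions). The sequence $(a_n)$ satisfies: (1) for $1\le n<d$, $a_n=\binom{1/d}{n}c^n$; (2) for $d^i\le n<d^{i+1}$ with $i\ge1$, $$a_n=\sum\alpha(n_0,n_1,\dots,n_{d^i-1}),$$ where the sum runs over all tuples of non-negative integers $(n_0,\dots,n_{d^i-1})$ with $n_0+d\sum_{k=1}^{d^i-1}kn_k=n$, and $$\alpha(n_0,\dots,n_{d^i-1})=\frac{c^{n_0}}{d^{n_0}n_0!}\prod_{k=1}^{d^i-1}\frac{a_k^{n_k}}{d^{n_k}n_k!}\prod_{j=0}^{\sum_{k=0}^{d^i-1}n_k-1}(1-jd).$$
   Context: Let $\mathbb{C}_p$ be the completion of an algebraic closure of $\mathbb{Q}_p$, $d\ge2$ an integer, $c\in\mathbb{C}_p$, and $(a_n)_{n\ge1}$ the unique sequence in $\mathbb{C}_p$ with the formal identity $\left(1+\sum_{n\ge1}a_nx^n\right)^d=1+cx+\sum_{n\ge1}a_nx^{nd}$. $\binom{1/d}{n}$ is the generalized binomial coefficient. *)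

theory Defs
  imports "HOL-Computational_Algebra.Formal_Power_Series"
begin

text \<open>The defining identity of the sequence (a_n), n \<ge> 1:
  (1 + sum_{n\<ge>1} a_n x^n)^d = 1 + c x + sum_{n\<ge>1} a_n x^{n d}.
  The value a 0 is irrelevant and ignored.\<close>

definition seq_fps :: "(nat \<Rightarrow> 'a::field) \<Rightarrow> 'a fps" where
  "seq_fps a = Abs_fps (\<lambda>n. if n = 0 then 1 else a n)"

definition seq_fps_pow :: "nat \<Rightarrow> (nat \<Rightarrow> 'a::field) \<Rightarrow> 'a fps" where
  "seq_fps_pow d a = Abs_fps (\<lambda>m. if 0 < m \<and> d dvd m then a (m div d) else 0)"

definition defining_identity :: "nat \<Rightarrow> 'a::field \<Rightarrow> (nat \<Rightarrow> 'a) \<Rightarrow> bool" where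
  "defining_identity d c a \<longleftrightarrow>
     (seq_fps a) ^ d = 1 + fps_const c * fps_X + seq_fps_pow d a"

text \<open>The coefficient alpha(n_0,...,n_{d^i-1}); the tuple is a function t with t k = 0 for k \<ge> d^i.\<close>

definition alpha :: "nat \<Rightarrow> nat \<Rightarrow> 'a::field_char_0 \<Rightarrow> (nat \<Rightarrow> 'a) \<Rightarrow> (nat \<Rightarrow> nat) \<Rightarrow> 'a" where
  "alpha d i c a t =
     c ^ t 0 / (of_nat d ^ t 0 * fact (t 0))
     * (\<Prod>k\<in>{1..<d^i}. a k ^ t k / (of_nat d ^ t k * fact (t k)))
     * (\<Prod>j<(\<Sum>k<d^i. t k). 1 - of_nat j * of_nat d)"

definition tuples :: "nat \<Rightarrow> nat \<Rightarrow> nat \<Rightarrow> (nat \<Rightarrow> nat) set" where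
  "tuples d i n = {t. (\<forall>k\<ge>d^i. t k = 0) \<and> t 0 + d * (\<Sum>k\<in>{1..<d^i}. k * t k) = n}"

end

theory Submission
  imports Defs "HOL-Library.FuncSet"
begin
unbundle fps_syntax

definition TT :: "nat \<Rightarrow> nat \<Rightarrow> (nat \<Rightarrow> nat) set" where
  "TT N m = {t. (\<forall>k\<ge>N. t k = 0) \<and> (\<Sum>k<N. t k) = m}"

lemma finite_TT: "finite (TT N m)"
proof -
  have "TT N m \<subseteq> (\<lambda>g k. if k<N then g k else 0) ` (PiE {..<N} (\<lambda>_. {..m}))"
  proof
    fix t assume t: "t \<in> TT N m"
    have le: "t k \<le> m" if "k < N" for k
    proof -
      have "t k \<le> (\<Sum>k<N. t k)" by (rule member_le_sum) (use that in auto)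
      thus ?thesis using t by (simp add: TT_def)
    qed
    have "restrict t {..<N} \<in> PiE {..<N} (\<lambda>_. {..m})" using le by auto
    moreover have "t = (\<lambda>k. if k<N then restrict t {..<N} k else 0)"
      using t by (auto simp: TT_def fun_eq_iff)
    ultimately show "t \<in> (\<lambda>g k. if k<N then g k else 0) ` (PiE {..<N} (\<lambda>_. {..m}))" by blast
  qed
  thus ?thesis by (rule finite_subset) (auto intro: finite_PiE)
qed

lemma multinomial_fps:
  fixes f :: "nat \<Rightarrow> 'a::field_char_0 fps"
  shows "(\<Sum>k<N. f k)^m = (\<Sum>t\<in>TT N m. fps_const (fact m / (\<Prod>k<N. fact (t k))) * (\<Prod>k<N. f k ^ t k))"
proof (induction N arbitrary: m)
  case 0
  show ?case
  proof (cases "m = 0")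
    case True
    hence "TT 0 m = {\<lambda>_. 0}" by (auto simp: TT_def)
    thus ?thesis using True by simp
  next
    case False
    hence "TT 0 m = {}" by (auto simp: TT_def)
    thus ?thesis using False by simp
  qed
next
  case (Suc N)
  define S where "S = (\<Sum>k<N. f k)"
  define H where "H = (\<lambda>(j::nat,t::nat\<Rightarrow>nat). fps_const (fact m / (fact j * (\<Prod>k<N. fact (t k)))) * ((\<Prod>k<N. f k ^ t k) * f N ^ j))"
  have "(\<Sum>k<Suc N. f k)^m = (f N + S)^m" by (simp add: S_def add.commute)
  also have "\<dots> = (\<Sum>j\<le>m. of_nat (m choose j) * f N ^ j * S ^ (m - j))"
    by (rule binomial_ring)
  also have "\<dots> = (\<Sum>j\<le>m. \<Sum>t\<in>TT N (m-j). H (j,t))"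
  proof (rule sum.cong[OF refl])
    fix j assume j: "j \<in> {..m}"
    have "of_nat (m choose j) * f N ^ j * S ^ (m - j)
        = (\<Sum>t\<in>TT N (m-j). fps_const (of_nat (m choose j)) * f N ^ j * (fps_const (fact (m-j) / (\<Prod>k<N. fact (t k))) * (\<Prod>k<N. f k ^ t k)))"
      by (simp add: S_def Suc.IH sum_distrib_left fps_of_nat)
    also have "\<dots> = (\<Sum>t\<in>TT N (m-j). H (j,t))"
    proof (rule sum.cong[OF refl])
      fix t
      have "(of_nat (m choose j) :: 'a) * (fact (m-j) / (\<Prod>k<N. fact (t k))) = fact m / (fact j * (\<Prod>k<N. fact (t k)))"
        using j by (simp add: binomial_fact field_simps)
      hence "fps_const (of_nat (m choose j) :: 'a) * fps_const (fact (m-j) / (\<Prod>k<N. fact (t k))) = fps_const (fact m / (fact j * (\<Prod>k<N. fact (t k))))"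
        by (metis fps_const_mult)
      thus "fps_const (of_nat (m choose j)) * f N ^ j * (fps_const (fact (m-j) / (\<Prod>k<N. fact (t k))) * (\<Prod>k<N. f k ^ t k)) = H (j,t)"
        unfolding H_def by (simp add: algebra_simps)
    qed
    finally show "of_nat (m choose j) * f N ^ j * S ^ (m - j) = (\<Sum>t\<in>TT N (m-j). H (j,t))" .
  qed
  also have "\<dots> = (\<Sum>p\<in>Sigma {..m} (\<lambda>j. TT N (m-j)). H p)"
    by (subst sum.Sigma) (auto simp: finite_TT)
  also have "\<dots> = (\<Sum>u\<in>TT (Suc N) m. fps_const (fact m / (\<Prod>k<Suc N. fact (u k))) * (\<Prod>k<Suc N. f k ^ u k))"
  proof (rule sum.reindex_bij_witness[of _ "\<lambda>u. (u N, u(N:=0))" "\<lambda>(j,t). t(N:=j)"])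
    fix p assume p: "p \<in> Sigma {..m} (\<lambda>j. TT N (m-j))"
    obtain j t where pj: "p = (j,t)" by (cases p)
    with p have j: "j \<le> m" and t: "t \<in> TT N (m-j)" by auto
    have tN: "t N = 0" using t by (simp add: TT_def)
    show "((case p of (j, t) \<Rightarrow> t(N := j)) N, (case p of (j, t) \<Rightarrow> t(N := j))(N := 0)) = p"
      using tN pj by auto
    have s1: "(\<Sum>k<N. (t(N:=j)) k) = (\<Sum>k<N. t k)" by (rule sum.cong) auto
    have p1: "(\<Prod>k<N. fact ((t(N:=j)) k)) = (\<Prod>k<N. fact (t k))" by (rule prod.cong) auto
    have p2: "(\<Prod>k<N. f k ^ (t(N:=j)) k) = (\<Prod>k<N. f k ^ t k)" by (rule prod.cong) auto
    show "(case p of (j, t) \<Rightarrow> t(N := j)) \<in> TT (Suc N) m"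
      using t j s1 by (auto simp: pj TT_def)
    show "fps_const (fact m / (\<Prod>k<Suc N. fact ((case p of (j, t) \<Rightarrow> t(N := j)) k))) *
          (\<Prod>k<Suc N. f k ^ (case p of (j, t) \<Rightarrow> t(N := j)) k) = H p"
      using p1 p2 by (simp add: pj H_def mult.commute)
  next
    fix u assume u: "u \<in> TT (Suc N) m"
    have s1: "(\<Sum>k<N. (u(N:=0)) k) = (\<Sum>k<N. u k)" by (rule sum.cong) auto
    show "(case (u N, u(N := 0)) of (j, t) \<Rightarrow> t(N := j)) = u" by simp
    show "(u N, u(N := 0)) \<in> Sigma {..m} (\<lambda>j. TT N (m - j))"
      using u s1 by (auto simp: TT_def)
  qed
  finally show ?case .
qed


lemma pow_nth_agree:
  fixes A B :: "'a::comm_ring_1 fps"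
  assumes "\<forall>j\<le>n. A $ j = B $ j"
  shows "\<forall>j\<le>n. A^m $ j = B^m $ j"
proof (induction m)
  case 0 show ?case by simp
next
  case (Suc m)
  show ?case
  proof (intro allI impI)
    fix j assume j: "j \<le> n"
    have "(A * A^m) $ j = (\<Sum>i=0..j. A $ i * A^m $ (j-i))" by (rule fps_mult_nth)
    also have "\<dots> = (\<Sum>i=0..j. B $ i * B^m $ (j-i))"
      by (rule sum.cong) (use j assms Suc.IH in auto)
    also have "\<dots> = (B * B^m) $ j" by (rule fps_mult_nth[symmetric])
    finally show "A^Suc m $ j = B^Suc m $ j" by simp
  qed
qed

lemma prod_monomial:
  fixes b :: "nat \<Rightarrow> 'a::field_char_0"
  shows "(\<Prod>k\<in>S. (fps_const (b k) * fps_X^(e k))^(t k)) = fps_const (\<Prod>k\<in>S. b k ^ t k) * fps_X^(\<Sum>k\<in>S. e k * t k)"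
proof (induction S rule: infinite_finite_induct)
  case (insert x F)
  have "(fps_const (b x) * fps_X^(e x))^(t x) = fps_const (b x ^ t x) * fps_X^(e x * t x)"
    by (simp add: power_mult_distrib fps_const_power power_mult)
  thus ?case using insert by (simp add: power_add mult_ac)
qed auto

lemma monomial_nth: "(fps_const (v::'a::field_char_0) * fps_X^w) $ n = (if n = w then v else 0)"
  by simp

lemma split0_sum: "0 < (N::nat) \<Longrightarrow> (\<Sum>k<N. g k) = g 0 + (\<Sum>k\<in>{1..<N}. g k)"
proof -
  assume "0 < N"
  hence "{..<N} = insert 0 {1..<N}" by (auto simp: Suc_le_eq)
  thus ?thesis by simp
qed

lemma split0_prod: "0 < (N::nat) \<Longrightarrow> (\<Prod>k<N. g k) = g 0 * (\<Prod>k\<in>{1..<N}. g k)"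
proof -
  assume "0 < N"
  hence "{..<N} = insert 0 {1..<N}" by (auto simp: Suc_le_eq)
  thus ?thesis by simp
qed

lemma root_formula:
  fixes c :: "'a::field_char_0"
  assumes d: "d \<ge> 2" and di: "defining_identity d c a"
  shows "seq_fps a = fps_binomial (1 / of_nat d) oo (fps_const c * fps_X + seq_fps_pow d a)"
proof -
  define Y where "Y = fps_const c * fps_X + seq_fps_pow d a"
  define C where "C = fps_binomial (1 / of_nat d) oo Y"
  have Y0: "Y $ 0 = 0" by (simp add: Y_def seq_fps_pow_def)
  have "C ^ d = fps_binomial (1 / of_nat d) ^ d oo Y" unfolding C_def by (rule fps_compose_power[OF Y0])
  also have "fps_binomial (1 / of_nat d) ^ d = (fps_binomial 1 :: 'a fps)"
    using d by (simp add: fps_binomial_power)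
  also have "\<dots> oo Y = 1 + Y" by (simp add: fps_binomial_1 fps_compose_add_distrib Y0)
  finally have C: "C ^ d = 1 + Y" .
  have A: "seq_fps a ^ d = 1 + Y" using di by (simp add: defining_identity_def Y_def add.assoc)
  obtain k where k: "d = Suc k" using d by (cases d) auto
  define r :: "nat \<Rightarrow> 'a \<Rightarrow> 'a" where "r = (\<lambda>_ _. 1)"
  have b0: "(1 + Y) $ 0 = 1" using Y0 by simp
  have e1: "seq_fps a = fps_radical r (Suc k) (1 + Y)"
    using radical_unique[of r k "1 + Y" "seq_fps a"] A k b0 by (simp add: r_def seq_fps_def)
  have e2: "C = fps_radical r (Suc k) (1 + Y)"
    using radical_unique[of r k "1 + Y" C] C k b0 by (simp add: r_def C_def)
  show ?thesis using e1 e2 by (simp add: C_def Y_def)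
qed


lemma Y_nth: "(fps_const (c::'a::field_char_0) * fps_X + seq_fps_pow d a) $ j
   = (if j = 1 then c else 0) + (if 0 < j \<and> d dvd j then a (j div d) else 0)"
  unfolding seq_fps_pow_def fps_add_nth by (simp add: fps_X_nth)

lemma coeff_formula:
  fixes c :: "'a::field_char_0"
  assumes d: "d \<ge> 2" and di: "defining_identity d c a" and n: "1 \<le> n"
  shows "a n = (\<Sum>m=0..n. ((1 / of_nat d) gchoose m) * ((fps_const c * fps_X + seq_fps_pow d a)^m $ n))"
proof -
  have "a n = seq_fps a $ n" using n by (simp add: seq_fps_def)
  also have "\<dots> = (\<Sum>m=0..n. ((1 / of_nat d) gchoose m) * ((fps_const c * fps_X + seq_fps_pow d a)^m $ n))"
    by (subst root_formula[OF d di]) (simp add: fps_compose_nth)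
  finally show ?thesis .
qed

lemma part1:
  fixes c :: "'a::field_char_0"
  assumes d: "d \<ge> 2" and di: "defining_identity d c a" and n: "1 \<le> n" "n < d"
  shows "a n = ((1 / of_nat d) gchoose n) * c ^ n"
proof -
  define Y where "Y = fps_const c * fps_X + seq_fps_pow d a"
  have ag: "\<forall>j\<le>n. Y $ j = (fps_const c * fps_X) $ j"
  proof (intro allI impI)
    fix j assume j: "j \<le> n"
    have "\<not> (0 < j \<and> d dvd j)" using j n by (auto dest: dvd_imp_le)
    thus "Y $ j = (fps_const c * fps_X) $ j" unfolding Y_def Y_nth by (auto simp: fps_X_nth)
  qed
  have pw: "Y^m $ n = (if n = m then c^m else 0)" for m
  proof -
    have "Y^m $ n = (fps_const c * fps_X)^m $ n" using pow_nth_agree[OF ag] by simp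
    also have "(fps_const c * fps_X)^m = fps_const (c^m) * fps_X^m"
      by (simp add: power_mult_distrib fps_const_power)
    finally show ?thesis by simp
  qed
  have "a n = (\<Sum>m=0..n. ((1 / of_nat d) gchoose m) * (Y^m $ n))"
    unfolding Y_def by (rule coeff_formula[OF d di n(1)])
  also have "\<dots> = (\<Sum>m=0..n. if m = n then ((1 / of_nat d) gchoose m) * c^m else 0)"
    by (rule sum.cong) (auto simp: pw)
  also have "\<dots> = ((1 / of_nat d) gchoose n) * c ^ n" by (simp add: sum.delta')
  finally show ?thesis .
qed


lemma alpha_eq:
  fixes c :: "'a::field_char_0" and d i :: nat and a :: "nat \<Rightarrow> 'a" and t :: "nat \<Rightarrow> nat"
  assumes d: "d \<ge> 2"
  defines "N \<equiv> d ^ i"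
  defines "b \<equiv> (\<lambda>k. if k = 0 then c else a k)"
  shows "alpha d i c a t = ((1 / of_nat d) gchoose (\<Sum>k<N. t k)) * (fact (\<Sum>k<N. t k) / (\<Prod>k<N. fact (t k)))
           * (\<Prod>k<N. b k ^ t k)"
proof -
  define M where "M = (\<Sum>k<N. t k)"
  have N0: "0 < N" using d by (simp add: N_def)
  have d0: "(of_nat d :: 'a) \<noteq> 0" using d by simp
  have h1: "((1 / of_nat d) gchoose M) * fact M = (\<Prod>j<M. 1 - of_nat j * of_nat d) / (of_nat d :: 'a) ^ M"
  proof -
    have "((1 / of_nat d) gchoose M) * fact M = (\<Prod>j<M. (1 / of_nat d :: 'a) - of_nat j)"
      by (simp add: gbinomial_mult_fact' atLeast0LessThan)
    also have "\<dots> = (\<Prod>j<M. (1 - of_nat j * of_nat d) / (of_nat d :: 'a))"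
      by (rule prod.cong) (use d0 in \<open>auto simp: field_simps\<close>)
    also have "\<dots> = (\<Prod>j<M. 1 - of_nat j * of_nat d) / (of_nat d :: 'a) ^ M"
      by (simp add: prod_dividef)
    finally show ?thesis .
  qed
  have h2: "(\<Prod>k<N. b k ^ t k / ((of_nat d :: 'a) ^ t k * fact (t k)))
          = (\<Prod>k<N. b k ^ t k) / ((of_nat d :: 'a) ^ M * (\<Prod>k<N. fact (t k)))"
    by (simp add: prod_dividef prod.distrib M_def power_sum)
  have h3: "(\<Prod>k<N. b k ^ t k / ((of_nat d :: 'a) ^ t k * fact (t k)))
        = c ^ t 0 / (of_nat d ^ t 0 * fact (t 0)) * (\<Prod>k\<in>{1..<N}. a k ^ t k / (of_nat d ^ t k * fact (t k)))"
    by (simp add: split0_prod[OF N0] b_def)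
  have "alpha d i c a t = (\<Prod>k<N. b k ^ t k / ((of_nat d :: 'a) ^ t k * fact (t k))) * (\<Prod>j<M. 1 - of_nat j * of_nat d)"
    unfolding alpha_def h3 by (simp add: M_def N_def)
  also have "\<dots> = ((1 / of_nat d) gchoose M) * fact M / (\<Prod>k<N. fact (t k)) * (\<Prod>k<N. b k ^ t k)"
    unfolding h1 h2 by (simp add: field_simps)
  finally show ?thesis by (simp add: M_def)
qed


lemma part2:
  fixes c :: "'a::field_char_0"
  assumes d: "d \<ge> 2" and di: "defining_identity d c a" and n: "1 \<le> n" "n < d ^ (i+1)"
  shows "a n = (\<Sum>t\<in>tuples d i n. alpha d i c a t)"
proof -
  define N where "N = d ^ i"
  define b where "b = (\<lambda>k. if k = 0 then c else a k)"
  define e where "e = (\<lambda>k::nat. if k = 0 then 1 else k * d)"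
  define f where "f = (\<lambda>k. fps_const (b k) * fps_X ^ (e k))"
  define Y where "Y = fps_const c * fps_X + seq_fps_pow d a"
  define w where "w = (\<lambda>t::nat\<Rightarrow>nat. \<Sum>k<N. e k * t k)"
  define r where "r = (1 / of_nat d :: 'a)"
  have N0: "0 < N" using d by (simp add: N_def)
  have nN: "n < N * d" using n by (simp add: N_def mult.commute)
  have ag: "\<forall>j\<le>n. Y $ j = (\<Sum>k<N. f k) $ j"
  proof (intro allI impI)
    fix j assume j: "j \<le> n"
    have S: "(\<Sum>k<N. f k) $ j = (\<Sum>k<N. if j = e k then b k else 0)"
      by (simp add: fps_sum_nth f_def, intro sum.cong refl, simp)
    show "Y $ j = (\<Sum>k<N. f k) $ j"
    proof (cases "j = 1")
      case True
      have "(\<Sum>k<N. if j = e k then b k else 0) = (\<Sum>k<N. if k = 0 then c else 0)"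
        by (rule sum.cong) (use True d in \<open>auto simp: e_def b_def\<close>)
      also have "\<dots> = c" using N0 by (simp add: sum.delta')
      finally show ?thesis unfolding S Y_def Y_nth using True d by auto
    next
      case j1: False
      show ?thesis
      proof (cases "0 < j \<and> d dvd j")
        case False
        have "(\<Sum>k<N. if j = e k then b k else 0) = 0"
          by (rule sum.neutral) (use False j1 d in \<open>auto simp: e_def\<close>)
        thus ?thesis unfolding S Y_def Y_nth using False j1 by auto
      next
        case True
        define K where "K = j div d"
        have jK: "j = K * d" using True by (simp add: K_def)
        have K1: "1 \<le> K" using True jK by (cases K) auto
        have KN: "K < N" using jK j nN d by (metis le_less_trans mult_less_cancel2)
        have "(\<Sum>k<N. if j = e k then b k else 0) = (\<Sum>k<N. if k = K then a K else 0)"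
          by (rule sum.cong) (use jK K1 j1 d in \<open>auto simp: e_def b_def\<close>)
        also have "\<dots> = a K" using KN by (simp add: sum.delta')
        finally show ?thesis unfolding S Y_def Y_nth using True j1 K_def by auto
      qed
    qed
  qed
  have pw: "Y^m $ n = (\<Sum>t\<in>TT N m. fact m / (\<Prod>k<N. fact (t k)) * (if n = w t then \<Prod>k<N. b k ^ t k else 0))" for m
  proof -
    have "Y^m $ n = (\<Sum>k<N. f k)^m $ n" using pow_nth_agree[OF ag] by simp
    also have "\<dots> = (\<Sum>t\<in>TT N m. (fps_const (fact m / (\<Prod>k<N. fact (t k))) * (\<Prod>k<N. f k ^ t k)) $ n)"
      by (simp add: multinomial_fps fps_sum_nth)
    also have "\<dots> = (\<Sum>t\<in>TT N m. fact m / (\<Prod>k<N. fact (t k)) * (if n = w t then \<Prod>k<N. b k ^ t k else 0))"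
      by (rule sum.cong) (simp_all add: f_def prod_monomial w_def del: fps_const_mult)
    finally show ?thesis .
  qed
  define G where "G = (\<lambda>t. (r gchoose (\<Sum>k<N. t k)) * (fact (\<Sum>k<N. t k) / (\<Prod>k<N. fact (t k))) * (\<Prod>k<N. b k ^ t k))"
  define A where "A = (\<lambda>m. {t\<in>TT N m. n = w t})"
  have "a n = (\<Sum>m=0..n. (r gchoose m) * (Y^m $ n))"
    unfolding Y_def r_def by (rule coeff_formula[OF d di n(1)])
  also have "\<dots> = (\<Sum>m=0..n. sum G (A m))"
  proof (rule sum.cong[OF refl])
    fix m
    have "(r gchoose m) * (Y^m $ n) = (\<Sum>t\<in>TT N m. if n = w t then G t else 0)"
      unfolding pw sum_distrib_left
      by (rule sum.cong[OF refl]) (auto simp: G_def TT_def)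
    also have "\<dots> = sum G (A m)" unfolding A_def by (simp add: sum.inter_filter finite_TT)
    finally show "(r gchoose m) * (Y^m $ n) = sum G (A m)" .
  qed
  also have "\<dots> = sum G (\<Union>m\<in>{0..n}. A m)"
  proof (rule sum.UNION_disjoint[symmetric])
    show "\<forall>m\<in>{0..n}. finite (A m)" by (simp add: A_def finite_TT)
  qed (auto simp: A_def TT_def)
  also have "(\<Union>m\<in>{0..n}. A m) = tuples d i n"
  proof -
    have wt: "w t = t 0 + d * (\<Sum>k\<in>{1..<N}. k * t k)" for t
      unfolding w_def split0_sum[OF N0] by (simp add: e_def sum_distrib_left mult_ac)
    have le: "(\<Sum>k<N. t k) \<le> w t" for t
      unfolding w_def by (rule sum_mono) (use d in \<open>simp add: e_def\<close>)
    show ?thesis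
    proof
      show "(\<Union>m\<in>{0..n}. A m) \<subseteq> tuples d i n"
        by (auto simp: A_def TT_def tuples_def wt N_def)
      show "tuples d i n \<subseteq> (\<Union>m\<in>{0..n}. A m)"
      proof
        fix t assume t: "t \<in> tuples d i n"
        hence "t \<in> A (\<Sum>k<N. t k)" by (auto simp: A_def TT_def tuples_def wt N_def)
        moreover have "(\<Sum>k<N. t k) \<in> {0..n}" using t le[of t] by (auto simp: tuples_def wt N_def)
        ultimately show "t \<in> (\<Union>m\<in>{0..n}. A m)" by blast
      qed
    qed
  qed
  also have "sum G (tuples d i n) = (\<Sum>t\<in>tuples d i n. alpha d i c a t)"
    by (rule sum.cong[OF refl]) (simp add: alpha_eq[OF d] G_def r_def N_def b_def)
  finally show ?thesis .
qed


theorem proposition3p1: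
  fixes d :: nat and c :: "'a::field_char_0" and a :: "nat \<Rightarrow> 'a"
  assumes "d \<ge> 2"
    and "defining_identity d c a"
  shows "(\<forall>n. 1 \<le> n \<and> n < d \<longrightarrow> a n = ((1 / of_nat d) gchoose n) * c ^ n)
       \<and> (\<forall>i n. 1 \<le> i \<and> d ^ i \<le> n \<and> n < d ^ (i + 1) \<longrightarrow>
              a n = (\<Sum>t\<in>tuples d i n. alpha d i c a t))"
proof (intro conjI allI impI)
  fix n assume "1 \<le> n \<and> n < d"
  thus "a n = ((1 / of_nat d) gchoose n) * c ^ n" using part1[OF assms] by blast
next
  fix i n assume h: "1 \<le> i \<and> d ^ i \<le> n \<and> n < d ^ (i + 1)"
  have "1 \<le> d ^ i" using assms(1) by simp
  hence "1 \<le> n" using h by linarith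
  thus "a n = (\<Sum>t\<in>tuples d i n. alpha d i c a t)" using part2[OF assms] h by blast
qed

end
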